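(* Let $p,r,s\ge1$, let $W$ be an $n\times n$ matrix weight on $\mathbb{R}^d$, and let $\{\mathcal{U}_Q\}_Q,\{\mathcal{V}_Q\}_Q$ be families (indexed by cubes) of self-adjoint positive definite $n\times n$ matrices. Then for each $\eta$-sparse family $\mathcal{S}$ and all $\vec h,\vec g:\mathbb{R}^d\to\mathbb{R}^n$, \begin{align*} \sum_{Q\in\mathcal{S}}\langle\langle W^{-\frac1p}\vec h\rangle\rangle_{r,Q}\langle\langle W^{\frac1p}\vec g\rangle\rangle_{s,Q}|Q| &\le\frac1\eta\sup_Q|\mathcal{V}_Q\mathcal{U}_Q|_{op}\,\|M_{\mathcal{V},W^{-\frac1p},r}(\vec h)\|_{L^p}\|M_{\mathcal{U},W^{\frac1p},s}(\vec g)\|_{L^{p'}}\\ &\le\frac1\eta\sup_Q|\mathcal{V}_Q\mathcal{U}_Q|_{op}\,\|M_{\mathcal{V},W^{-\frac1p},r}\|_{L^p\to L^p}\|M_{\mathcal{U},W^{\frac1p},s}\|_{L^{p'}\to L^{p'}}\|\vec h\|_{L^p}\|\vec g\|_{L^{p'}}, \end{align*} where $M_{\mathcal{V},W^{-\frac1p},r}(\vec h)(z)=\sup_{Q\ni z}\big(\frac1{|Q|}\int_Q|\mathcal{V}_Q^{-1}W^{-\frac1p}(x)\vec h(x)|^rdx\big)^{\frac1r}$ and $M_{\mathcal{U},W^{\frac1p},s}(\vec g)(z)=\sup_{Q\ni z}\big(\frac1{|Q|}\int_Q|\mathcal{U}_Q^{-1}W^{\frac1p}(x)\vec g(x)|^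sdx\big)^{\frac1s}$.
   Context: Matrix weight: $W(x)$ self-adjoint positive definite a.e.; $|\cdot|_{op}$ operator norm; $\|\vec h\|_{L^p}=\||\vec h|\|_{L^p(\mathbb{R}^d)}$, $p'=p/(p-1)$. For $1\le p<\infty$, $\langle\langle\vec f\rangle\rangle_{p,Q}=\{\frac1{|Q|}\int_Q\vec f\varphi:\varphi:Q\to\mathbb{R},\ (\frac1{|Q|}\int_Q|\varphi|^{p'})^{1/p'}\le1\}$; for compact convex symmetric $A,B$, $AB=\max\{\langle a,b\rangle:a\in A,b\in B\}$. $\mathcal{S}$ is $\eta$-sparse ($\eta\in(0,1)$) if there are pairwise disjoint $E_Q\subset Q$, $Q\in\mathcal{S}$, with $|E_Q|\ge\eta|Q|$. *)

theory Defs
  imports "HOL-Analysis.Analysis" "HOL-Probability.Essential_Supremum"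
begin

definition spd :: "real^'n^'n \<Rightarrow> bool" where
  "spd A \<longleftrightarrow> transpose A = A \<and> (\<forall>v. v \<noteq> 0 \<longrightarrow> 0 < v \<bullet> (A *v v))"

definition diag_mat :: "('n::finite \<Rightarrow> real) \<Rightarrow> real^'n^'n" where
  "diag_mat l = (\<chi> i j. if i = j then l i else 0)"

text \<open>Real powers A^t of a symmetric positive definite matrix via the spectral theorem:
  if A = U diag(l) U^T with U orthogonal and l > 0, then A^t = U diag(l^t) U^T
  (this is independent of the chosen diagonalisation).\<close>
definition matpow :: "real^'n^'n \<Rightarrow> real \<Rightarrow> real^'n^'n" where
  "matpow A t = (SOME B. \<exists>U l. orthogonal_matrix U \<and> (\<forall>i. 0 < l i) \<and>
      A = U ** diag_mat l ** transpose U \<and>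
      B = U ** diag_mat (\<lambda>i. l i powr t) ** transpose U)"

definition opnorm :: "real^'n^'m \<Rightarrow> real" where
  "opnorm A = onorm (\<lambda>v. A *v v)"

definition cubes :: "(real^'d) set set" where
  "cubes = {cbox a (a + (\<chi> i. l)) | a l. 0 < l}"

definition sparse :: "real \<Rightarrow> (real^'d) set set \<Rightarrow> bool" where
  "sparse \<eta> S \<longleftrightarrow> S \<subseteq> cubes \<and>
     (\<exists>E. (\<forall>Q\<in>S. E Q \<in> sets lebesgue \<and> E Q \<subseteq> Q \<and>
              \<eta> * measure lebesgue Q \<le> measure lebesgue (E Q)) \<and>
          disjoint_family_on E S)"

definition enn_powr :: "ennreal \<Rightarrow> real \<Rightarrow> ennreal" where
  "enn_powr a q = (if a = \<infinity> then \<infinity> else ennreal (enn2real a powr q))"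

definition Lp_enn :: "ereal \<Rightarrow> 'a measure \<Rightarrow> ('a \<Rightarrow> ennreal) \<Rightarrow> ennreal" where
  "Lp_enn p M F = (if p = \<infinity> then esssup M F
      else enn_powr (\<integral>\<^sup>+ x. enn_powr (F x) (real_of_ereal p) \<partial>M) (1 / real_of_ereal p))"

definition Lp_norm :: "ereal \<Rightarrow> 'a measure \<Rightarrow> ('a \<Rightarrow> 'b::real_normed_vector) \<Rightarrow> ennreal" where
  "Lp_norm p M f = Lp_enn p M (\<lambda>x. ennreal (norm (f x)))"

definition dual_exp :: "real \<Rightarrow> ereal" where
  "dual_exp p = (if p = 1 then \<infinity> else ereal (p / (p - 1)))"

text \<open>\<langle>\<langle>f\<rangle>\<rangle>_{r,Q} = { (1/|Q|) \<integral>_Q f \<phi> : (1/|Q| \<integral>_Q |\<phi>|^{r'})^{1/r'} \<le> 1 }; the normalised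
  r'-norm on Q is the L^{r'} norm w.r.t. the uniform (normalised) measure on Q.\<close>
definition cbody :: "real \<Rightarrow> (real^'d) set \<Rightarrow> (real^'d \<Rightarrow> real^'n) \<Rightarrow> (real^'n) set" where
  "cbody r Q f = {(1 / measure lebesgue Q) *\<^sub>R (LINT x:Q|lebesgue. \<phi> x *\<^sub>R f x) | \<phi>.
      \<phi> \<in> borel_measurable lebesgue \<and> set_integrable lebesgue Q (\<lambda>x. \<phi> x *\<^sub>R f x) \<and>
      Lp_norm (dual_exp r) (uniform_measure lebesgue Q) \<phi> \<le> 1}"

text \<open>AB = max { <a,b> : a \<in> A, b \<in> B } (nonnegative for symmetric sets).\<close>
definition body_prod :: "(real^'n) set \<Rightarrow> (real^'n) set \<Rightarrow> ennreal" where
  "body_prod A B = (SUP ab\<in>A \<times> B. ennreal (fst ab \<bullet> snd ab))"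

definition maxop :: "((real^'d) set \<Rightarrow> real^'n^'n) \<Rightarrow> (real^'d \<Rightarrow> real^'n^'n) \<Rightarrow> real
                      \<Rightarrow> (real^'d \<Rightarrow> real^'n) \<Rightarrow> real^'d \<Rightarrow> ennreal" where
  "maxop V A r h z = (SUP Q\<in>{Q\<in>cubes. z \<in> Q}.
      Lp_norm (ereal r) (uniform_measure lebesgue Q) (\<lambda>x. matrix_inv (V Q) *v (A x *v h x)))"

definition op_Lp_norm :: "ereal \<Rightarrow> ((real^'d \<Rightarrow> real^'n) \<Rightarrow> real^'d \<Rightarrow> ennreal) \<Rightarrow> ennreal" where
  "op_Lp_norm p T = (SUP f\<in>{f. f \<in> borel_measurable lebesgue \<and> Lp_norm p lebesgue f \<le> 1}.
      Lp_enn p lebesgue (T f))"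

end

theory Submission
  imports Defs
begin


lemma Lp_enn_ereal: "Lp_enn (ereal q) M f = enn_powr (\<integral>\<^sup>+ x. enn_powr (f x) q \<partial>M) (1/q)"
  unfolding Lp_enn_def by simp

lemma Lp_enn_infty: "Lp_enn \<infinity> M f = esssup M f"
  unfolding Lp_enn_def by simp

lemma enn_powr_ennreal: "0 \<le> t \<Longrightarrow> enn_powr (ennreal t) q = ennreal (t powr q)"
  by (simp add: enn_powr_def)

lemma enn_powr_top[simp]: "enn_powr \<infinity> q = \<infinity>"
  by (simp add: enn_powr_def)

lemma enn_powr_top'[simp]: "enn_powr top q = top"
  by (simp add: enn_powr_def)

lemma enn_powr_zero[simp]: "enn_powr 0 q = 0"
  by (simp add: enn_powr_def)

lemma enn_powr_mono: assumes "0 \<le> q" "a \<le> b" shows "enn_powr a q \<le> enn_powr b q"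
proof (cases "b = \<infinity>")
  case True then show ?thesis by simp
next
  case False
  then have "a \<noteq> \<infinity>" using assms(2) by (auto simp: top_unique)
  obtain x where x: "a = ennreal x" "0 \<le> x" using `a \<noteq> \<infinity>` by (cases a) auto
  obtain y where y: "b = ennreal y" "0 \<le> y" using False by (cases b) auto
  have xy: "a = ennreal x" "b = ennreal y" "0 \<le> x" "0 \<le> y" using x y by auto
  then have "x \<le> y" using assms(2) by (simp add: ennreal_le_iff)
  then show ?thesis using xy assms(1) by (simp add: enn_powr_ennreal powr_mono2)
qed

lemma enn_powr_eq_0_iff: "enn_powr a q = 0 \<longleftrightarrow> a = 0"
proof (cases a)
  case (real r)
  then show ?thesis by (simp add: enn_powr_ennreal)
next
  case top
  then show ?thesis by simp
qed

lemma enn_powr_one[simp]: "enn_powr a 1 = a"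
  by (cases a) (auto simp: enn_powr_ennreal)

lemma enn_powr_powr: assumes "0 < q" shows "enn_powr (enn_powr a q) (1/q) = a"
  using assms by (cases a) (auto simp: enn_powr_ennreal powr_powr)

lemma enn_powr_mult: "enn_powr (a * b) q = enn_powr a q * enn_powr b q"
proof (cases "a = 0 \<or> b = 0")
  case True then show ?thesis by auto
next
  case False
  have pos: "enn_powr c q \<noteq> 0" if "c \<noteq> 0" for c using that enn_powr_eq_0_iff by blast
  show ?thesis
  proof (cases "a = top \<or> b = top")
    case True
    then have "a * b = top" using False by (auto simp: ennreal_mult_eq_top_iff)
    from True show ?thesis
    proof
      assume "a = top"
      then show ?thesis using `a * b = top` pos[of b] False
        by (simp add: ennreal_top_mult_right)
    next
      assume "b = top"
      then show ?thesis using `a * b = top` pos[of a] False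
        by (simp add: ennreal_top_mult_left)
    qed
  next
    case F2: False
    obtain x where x: "a = ennreal x" "0 \<le> x" using F2 by (cases a) auto
    obtain y where y: "b = ennreal y" "0 \<le> y" using F2 by (cases b) auto
    have "enn_powr (a * b) q = ennreal ((x * y) powr q)"
      using x y by (simp add: enn_powr_ennreal flip: ennreal_mult)
    also have "\<dots> = ennreal (x powr q) * ennreal (y powr q)"
      using x y by (simp add: powr_mult ennreal_mult)
    also have "\<dots> = enn_powr a q * enn_powr b q"
      unfolding x(1) y(1) enn_powr_ennreal[OF x(2)] enn_powr_ennreal[OF y(2)] ..
    finally show ?thesis .
  qed
qed

lemma measurable_enn_powr[measurable]:
  assumes [measurable]: "f \<in> borel_measurable M"
  shows "(\<lambda>x. enn_powr (f x) q) \<in> borel_measurable M"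
  unfolding enn_powr_def by measurable

lemma Lp_enn_mono:
  assumes "f \<in> borel_measurable M" "\<And>x. f x \<le> g x" "P = \<infinity> \<or> (\<exists>q. P = ereal q \<and> 0 < q)"
  shows "Lp_enn P M f \<le> Lp_enn P M g"
  using assms(3)
proof
  assume "P = \<infinity>"
  then show ?thesis
  proof (cases "g \<in> borel_measurable M")
    case True then show ?thesis unfolding `P = \<infinity>` Lp_enn_infty using esssup_mono[OF assms(1), of g] assms(2) by blast
  next
    case False then show ?thesis unfolding `P = \<infinity>` Lp_enn_infty esssup_non_measurable[OF False] by simp
  qed
next
  assume "\<exists>q. P = ereal q \<and> 0 < q"
  then obtain q where q: "P = ereal q" "0 < q" by auto
  have "(\<integral>\<^sup>+ x. enn_powr (f x) q \<partial>M) \<le> (\<integral>\<^sup>+ x. enn_powr (g x) q \<partial>M)"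
    by (rule nn_integral_mono) (use q assms(2) enn_powr_mono in auto)
  moreover have "0 \<le> 1 / q" using q by simp
  ultimately have "enn_powr (\<integral>\<^sup>+ x. enn_powr (f x) q \<partial>M) (1/q) \<le> enn_powr (\<integral>\<^sup>+ x. enn_powr (g x) q \<partial>M) (1/q)"
    using enn_powr_mono by blast
  then show ?thesis unfolding Lp_enn_ereal q(1) .
qed


lemma young_real:
  fixes p q a b u v :: real
  assumes "p > 1" "q > 1" "1/p + 1/q = 1" "a > 0" "b > 0" "u \<ge> 0" "v \<ge> 0"
  shows "u * v \<le> (b / (p * a powr (p-1))) * u powr p + (a / (q * b powr (q-1))) * v powr q"
proof -
  have y: "(u/a) * (v/b) \<le> (u/a) powr p / p + (v/b) powr q / q"
    by (rule Youngs_inequality) (use assms in auto)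
  have "u * v = a * b * ((u/a) * (v/b))" using assms by (simp add: field_simps)
  also have "\<dots> \<le> a * b * ((u/a) powr p / p + (v/b) powr q / q)"
    using y assms by (intro mult_left_mono) auto
  also have "(u/a) powr p = u powr p / (a powr (p-1) * a)"
    using assms by (simp add: powr_divide powr_diff)
  also have "(v/b) powr q = v powr q / (b powr (q-1) * b)"
    using assms by (simp add: powr_divide powr_diff)
  also have "a * b * (u powr p / (a powr (p - 1) * a) / p + v powr q / (b powr (q - 1) * b) / q)
     = (b / (p * a powr (p-1))) * u powr p + (a / (q * b powr (q-1))) * v powr q"
    using assms by (simp add: field_simps)
  finally show ?thesis .
qed

lemma young_enn:
  fixes p q a b :: real and x y :: ennreal
  assumes "p > 1" "q > 1" "1/p + 1/q = 1" "a > 0" "b > 0"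
  shows "x * y \<le> ennreal (b / (p * a powr (p-1))) * enn_powr x p + ennreal (a / (q * b powr (q-1))) * enn_powr y q"
proof -
  define c1 where "c1 = b / (p * a powr (p-1))"
  define c2 where "c2 = a / (q * b powr (q-1))"
  have c1: "c1 > 0" and c2: "c2 > 0" using assms by (auto simp: c1_def c2_def)
  show ?thesis unfolding c1_def[symmetric] c2_def[symmetric]
  proof (cases "x = top \<or> y = top")
    case True
    show "x * y \<le> ennreal c1 * enn_powr x p + ennreal c2 * enn_powr y q"
    proof (cases "x = 0 \<or> y = 0")
      case True then show ?thesis by auto
    next
      case False
      from `x = top \<or> y = top` have eq: "ennreal c1 * enn_powr x p + ennreal c2 * enn_powr y q = top"
      proof
        assume "x = top"
        then have "ennreal c1 * enn_powr x p = top" using c1 by (simp add: ennreal_top_mult_left)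
        then show ?thesis by simp
      next
        assume "y = top"
        then have "ennreal c2 * enn_powr y q = top" using c2 by (simp add: ennreal_top_mult_left)
        then show ?thesis by simp
      qed
      show ?thesis unfolding eq by (rule top_greatest)
    qed
  next
    case False
    obtain u where u: "x = ennreal u" "0 \<le> u" using False by (cases x) auto
    obtain v where v: "y = ennreal v" "0 \<le> v" using False by (cases y) auto
    have "u * v \<le> c1 * u powr p + c2 * v powr q"
      unfolding c1_def c2_def by (rule young_real) (use assms u v in auto)
    then have "ennreal (u * v) \<le> ennreal (c1 * u powr p + c2 * v powr q)"
      by (rule ennreal_leI)
    also have "\<dots> = ennreal c1 * ennreal (u powr p) + ennreal c2 * ennreal (v powr q)"
      using c1 c2 by (simp add: ennreal_plus ennreal_mult)
    finally show "x * y \<le> ennreal c1 * enn_powr x p + ennreal c2 * enn_powr y q"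
      using u v by (simp add: enn_powr_ennreal ennreal_mult)
  qed
qed

lemma dual_exp_gt1: assumes "1 < p" shows "dual_exp p = ereal (p / (p - 1))" "1 < p / (p - 1)"
  "1 / p + 1 / (p / (p - 1)) = 1"
  using assms by (auto simp: dual_exp_def field_simps)

lemma Hoelder_nn:
  assumes f[measurable]: "f \<in> borel_measurable M" and g[measurable]: "g \<in> borel_measurable M"
    and p: "1 \<le> p"
  shows "(\<integral>\<^sup>+x. f x * g x \<partial>M) \<le> Lp_enn (ereal p) M f * Lp_enn (dual_exp p) M g"
proof (cases "p = 1")
  case True
  have d: "dual_exp p = \<infinity>" by (simp add: dual_exp_def True)
  have "(\<integral>\<^sup>+x. f x * g x \<partial>M) \<le> (\<integral>\<^sup>+x. f x * esssup M g \<partial>M)"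
    by (rule nn_integral_mono_AE) (use esssup_AE[of g M] in \<open>eventually_elim, auto intro: mult_left_mono\<close>)
  also have "\<dots> = (\<integral>\<^sup>+x. f x \<partial>M) * esssup M g" by (rule nn_integral_multc[OF f])
  also have "\<dots> = Lp_enn (ereal p) M f * Lp_enn (dual_exp p) M g"
    unfolding d Lp_enn_infty by (simp add: True Lp_enn_ereal)
  finally show ?thesis .
next
  case False
  then have p1: "1 < p" using p by simp
  define q where "q = p / (p - 1)"
  have d: "dual_exp p = ereal q" and q1: "1 < q" and pq: "1/p + 1/q = 1"
    using dual_exp_gt1[OF p1] by (auto simp: q_def)
  define A where "A = (\<integral>\<^sup>+x. enn_powr (f x) p \<partial>M)"
  define B where "B = (\<integral>\<^sup>+x. enn_powr (g x) q \<partial>M)"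
  have R: "Lp_enn (ereal p) M f * Lp_enn (dual_exp p) M g = enn_powr A (1/p) * enn_powr B (1/q)"
    unfolding d Lp_enn_ereal A_def B_def ..
  show ?thesis
  proof (cases "A = 0 \<or> B = 0")
    case True
    have "AE x in M. f x * g x = 0"
    proof (cases "A = 0")
      case True
      then have "AE x in M. enn_powr (f x) p = 0" unfolding A_def
        by (subst (asm) nn_integral_0_iff_AE) auto
      then show ?thesis by eventually_elim (simp add: enn_powr_eq_0_iff)
    next
      case False
      then have "B = 0" using `A = 0 \<or> B = 0` by simp
      then have "AE x in M. enn_powr (g x) q = 0" unfolding B_def
        by (subst (asm) nn_integral_0_iff_AE) auto
      then show ?thesis by eventually_elim (simp add: enn_powr_eq_0_iff)
    qed
    then have "(\<integral>\<^sup>+x. f x * g x \<partial>M) = 0"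
      by (subst nn_integral_0_iff_AE) auto
    then show ?thesis by simp
  next
    case nz: False
    have pa: "enn_powr A (1/p) \<noteq> 0" "enn_powr B (1/q) \<noteq> 0"
      using nz by (auto simp: enn_powr_eq_0_iff)
    show ?thesis
    proof (cases "A = top \<or> B = top")
      case True
      then have "enn_powr A (1/p) * enn_powr B (1/q) = top"
      proof
        assume "A = top" then show ?thesis using pa by (simp add: ennreal_top_mult_right)
      next
        assume "B = top" then show ?thesis using pa by (simp add: ennreal_top_mult_left)
      qed
      then show ?thesis unfolding R by (rule ssubst) (rule top_greatest)
    next
      case False
      obtain \<alpha> where al: "A = ennreal \<alpha>" "0 \<le> \<alpha>" using False by (cases A) auto
      obtain \<beta> where be: "B = ennreal \<beta>" "0 \<le> \<beta>" using False by (cases B) auto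
      have al0: "\<alpha> > 0" using al nz by (auto simp: less_le)
      have be0: "\<beta> > 0" using be nz by (auto simp: less_le)
      define a where "a = \<alpha> powr (1/p)"
      define b where "b = \<beta> powr (1/q)"
      have a0: "a > 0" and b0: "b > 0" using al0 be0 by (auto simp: a_def b_def)
      have apow: "a powr p = \<alpha>" using al0 p1 by (simp add: a_def powr_powr)
      have bpow: "b powr q = \<beta>" using be0 q1 by (simp add: b_def powr_powr)
      define c1 where "c1 = b / (p * a powr (p-1))"
      define c2 where "c2 = a / (q * b powr (q-1))"
      have c1: "c1 \<ge> 0" and c2: "c2 \<ge> 0" using a0 b0 p1 q1 by (auto simp: c1_def c2_def)
      have "(\<integral>\<^sup>+x. f x * g x \<partial>M) \<le> (\<integral>\<^sup>+x. ennreal c1 * enn_powr (f x) p + ennreal c2 * enn_powr (g x) q \<partial>M)"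
        by (rule nn_integral_mono) (unfold c1_def c2_def, rule young_enn, use p1 q1 pq a0 b0 in auto)
      also have "\<dots> = ennreal c1 * A + ennreal c2 * B"
        unfolding A_def B_def by (simp add: nn_integral_add nn_integral_cmult)
      also have "\<dots> = ennreal (c1 * \<alpha> + c2 * \<beta>)"
        using al be c1 c2 by (simp add: ennreal_plus ennreal_mult)
      also have "c1 * \<alpha> + c2 * \<beta> = a * b * (1/p + 1/q)"
      proof -
        have "c1 * \<alpha> = a * b / p"
          unfolding c1_def apow[symmetric] using a0 p1
          by (simp add: powr_diff field_simps)
        moreover have "c2 * \<beta> = a * b / q"
          unfolding c2_def bpow[symmetric] using b0 q1
          by (simp add: powr_diff field_simps)
        ultimately show ?thesis by (simp add: field_simps)
      qed
      also have "\<dots> = a * b" using pq by simp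
      also have "ennreal (a * b) = enn_powr A (1/p) * enn_powr B (1/q)"
        using al be a0 b0 by (simp add: enn_powr_ennreal a_def b_def ennreal_mult)
      finally show ?thesis unfolding R .
    qed
  qed
qed


lemma cube_facts:
  fixes Q :: "(real^'d) set"
  assumes "Q \<in> cubes"
  shows "Q \<in> sets lebesgue" "emeasure lebesgue Q = ennreal (measure lebesgue Q)"
    "0 < measure lebesgue Q" "Q \<noteq> {}" "Q \<in> sets borel"
proof -
  obtain a l where Q: "Q = cbox a (a + (\<chi> i. l))" "0 < l" using assms by (auto simp: cubes_def)
  have "a \<in> cbox a (a + (\<chi> i. l))" using Q(2) by (simp add: mem_box_cart)
  then have ne: "cbox a (a + (\<chi> i. l)) \<noteq> {}" by blast
  show "Q \<in> sets lebesgue" unfolding Q by simp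
  show "Q \<in> sets borel" unfolding Q by simp
  have fin: "emeasure lborel (cbox a (a + (\<chi> i. l))) \<noteq> top"
    using emeasure_lborel_cbox_finite[of a "a + (\<chi> i. l)"] by (simp add: less_top)
  show "emeasure lebesgue Q = ennreal (measure lebesgue Q)" unfolding Q
    using emeasure_eq_ennreal_measure[OF fin] by simp
  have "measure lebesgue Q = measure lborel Q" unfolding Q by simp
  also have "\<dots> = (\<Prod>i\<in>(UNIV::'d set). l)" unfolding Q content_cbox_cart[OF ne] by simp
  finally show "0 < measure lebesgue Q" using Q(2) by simp
  show "Q \<noteq> {}" using ne Q by simp
qed

lemma minv:
  fixes A :: "real^'n^'n"
  assumes "invertible A"
  shows "A ** matrix_inv A = mat 1" "matrix_inv A ** A = mat 1"
proof -
  have "\<exists>A'. A ** A' = mat 1 \<and> A' ** A = mat 1" using assms by (simp add: invertible_def)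
  then have "A ** matrix_inv A = mat 1 \<and> matrix_inv A ** A = mat 1"
    unfolding matrix_inv_def by (rule someI_ex)
  then show "A ** matrix_inv A = mat 1" "matrix_inv A ** A = mat 1" by auto
qed

lemma spd_invertible:
  fixes A :: "real^'n^'n"
  assumes "spd A" shows "invertible A"
proof -
  have "\<forall>x. A *v x = 0 \<longrightarrow> x = 0"
  proof (intro allI impI)
    fix x assume "A *v x = 0"
    show "x = 0"
    proof (rule ccontr)
      assume "x \<noteq> 0"
      then have "0 < x \<bullet> (A *v x)" using assms by (simp add: spd_def)
      then show False using `A *v x = 0` by simp
    qed
  qed
  then show ?thesis unfolding invertible_left_inverse matrix_left_invertible_ker .
qed

lemma spd_inv_apply:
  fixes A :: "real^'n^'n"
  assumes "spd A" shows "A *v (matrix_inv A *v v) = v" "matrix_inv A *v (A *v v) = v"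
  using minv[OF spd_invertible[OF assms]]
  by (simp_all add: matrix_vector_mul_assoc)

lemma spd_inner_id:
  fixes V U :: "real^'n^'n"
  assumes "spd V" "spd U"
  shows "a \<bullet> b = (matrix_inv V *v a) \<bullet> ((V ** U) *v (matrix_inv U *v b))"
proof -
  have "(V ** U) *v (matrix_inv U *v b) = V *v b"
    by (simp add: matrix_vector_mul_assoc[symmetric] spd_inv_apply[OF assms(2)])
  moreover have "(matrix_inv V *v a) \<bullet> (V *v b) = ((matrix_inv V *v a) v* V) \<bullet> b"
    by (simp add: dot_lmul_matrix)
  moreover have "(matrix_inv V *v a) v* V = a"
  proof -
    have "transpose V = V" using assms(1) by (simp add: spd_def)
    then have "(matrix_inv V *v a) v* V = (matrix_inv V *v a) v* transpose V" by simp
    also have "\<dots> = V *v (matrix_inv V *v a)" by simp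
    also have "\<dots> = a" by (rule spd_inv_apply[OF assms(1)])
    finally show ?thesis .
  qed
  ultimately show ?thesis by simp
qed

lemma inner_bound:
  fixes V U :: "real^'n^'n"
  assumes "spd V" "spd U"
  shows "a \<bullet> b \<le> norm (matrix_inv V *v a) * opnorm (V ** U) * norm (matrix_inv U *v b)"
proof -
  have bl: "bounded_linear (\<lambda>v. (V ** U) *v v)" by (rule matrix_vector_mul_bounded_linear)
  have "a \<bullet> b \<le> norm (matrix_inv V *v a) * norm ((V ** U) *v (matrix_inv U *v b))"
    unfolding spd_inner_id[OF assms, of a b] by (rule norm_cauchy_schwarz)
  also have "\<dots> \<le> norm (matrix_inv V *v a) * (opnorm (V ** U) * norm (matrix_inv U *v b))"
    by (rule mult_left_mono) (use onorm[OF bl] in \<open>auto simp: opnorm_def\<close>)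
  finally show ?thesis by (simp add: mult.assoc)
qed

lemma opnorm_nonneg: "0 \<le> opnorm (A :: real^'n^'m)"
  unfolding opnorm_def by (rule onorm_pos_le[OF matrix_vector_mul_bounded_linear])


lemma avg_bound:
  fixes Q :: "(real^'d) set" and F :: "real^'d \<Rightarrow> real^'n" and T :: "real^'n^'n"
  assumes Q: "Q \<in> cubes" and r: "1 \<le> r" and a: "a \<in> cbody r Q F"
  shows "ennreal (norm (T *v a)) \<le> Lp_norm (ereal r) (uniform_measure lebesgue Q) (\<lambda>x. T *v F x)"
proof -
  obtain \<phi> where a_eq: "a = (1 / measure lebesgue Q) *\<^sub>R (LINT x:Q|lebesgue. \<phi> x *\<^sub>R F x)"
    and \<phi>m: "\<phi> \<in> borel_measurable lebesgue" and int: "set_integrable lebesgue Q (\<lambda>x. \<phi> x *\<^sub>R F x)"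
    and \<phi>n: "Lp_norm (dual_exp r) (uniform_measure lebesgue Q) \<phi> \<le> 1"
    using a unfolding cbody_def by blast
  note cf = cube_facts[OF Q]
  define m where "m = measure lebesgue Q"
  have m0: "0 < m" using cf by (simp add: m_def)
  define \<psi> where "\<psi> x = indicator Q x *\<^sub>R (\<phi> x *\<^sub>R F x)" for x
  have \<psi>i: "integrable lebesgue \<psi>" using int unfolding set_integrable_def \<psi>_def .
  have \<psi>m: "\<psi> \<in> borel_measurable lebesgue" using \<psi>i by (rule borel_measurable_integrable)
  define k where "k x = norm (T *v \<psi> x)" for x
  have T\<psi>i: "integrable lebesgue (\<lambda>x. T *v \<psi> x)"
    by (rule integrable_bounded_linear[OF matrix_vector_mul_bounded_linear \<psi>i])
  have T\<psi>m: "(\<lambda>x. T *v \<psi> x) \<in> borel_measurable lebesgue" using T\<psi>i by (rule borel_measurable_integrable)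
  have ki: "integrable lebesgue k" unfolding k_def using T\<psi>i by (rule integrable_norm)
  have km: "k \<in> borel_measurable lebesgue" using ki by (rule borel_measurable_integrable)
  have "T *v a = (1/m) *\<^sub>R (T *v integral\<^sup>L lebesgue \<psi>)"
    unfolding a_eq m_def set_lebesgue_integral_def \<psi>_def by (simp add: matrix_vector_mult_scaleR)
  also have "T *v integral\<^sup>L lebesgue \<psi> = integral\<^sup>L lebesgue (\<lambda>x. T *v \<psi> x)"
    by (rule integral_bounded_linear[OF matrix_vector_mul_bounded_linear \<psi>i, symmetric])
  finally have "norm (T *v a) = (1/m) * norm (integral\<^sup>L lebesgue (\<lambda>x. T *v \<psi> x))" using m0 by simp
  also have "\<dots> \<le> (1/m) * integral\<^sup>L lebesgue k"
    unfolding k_def using m0 by (intro mult_left_mono integral_norm_bound) auto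
  finally have step1: "ennreal (norm (T *v a)) \<le> ennreal ((1/m) * integral\<^sup>L lebesgue k)" by (rule ennreal_leI)
  have I0: "0 \<le> integral\<^sup>L lebesgue k" unfolding k_def by simp
  have "ennreal (integral\<^sup>L lebesgue k) = (\<integral>\<^sup>+x. ennreal (k x) \<partial>lebesgue)"
    by (rule nn_integral_eq_integral[OF ki, symmetric]) (auto simp: k_def)
  also have "\<dots> = (\<integral>\<^sup>+x. ennreal (k x) * indicator Q x \<partial>lebesgue)"
    by (rule nn_integral_cong) (auto simp: k_def \<psi>_def indicator_def)
  finally have "ennreal (integral\<^sup>L lebesgue k) / ennreal m = (\<integral>\<^sup>+x. ennreal (k x) \<partial>uniform_measure lebesgue Q)"
    using nn_integral_uniform_measure[of "\<lambda>x. ennreal (k x)" lebesgue Q] km cf(1) cf(2)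
    by (simp add: m_def)
  moreover have "ennreal (integral\<^sup>L lebesgue k) / ennreal m = ennreal ((1/m) * integral\<^sup>L lebesgue k)"
    using I0 m0 by (simp add: divide_ennreal)
  ultimately have step2: "ennreal ((1/m) * integral\<^sup>L lebesgue k) = (\<integral>\<^sup>+x. ennreal (k x) \<partial>uniform_measure lebesgue Q)"
    by simp
  define G where "G x = (if \<phi> x = 0 then 0 else (1 / \<phi> x) *\<^sub>R (T *v \<psi> x))" for x
  have Gm: "G \<in> borel_measurable lebesgue" unfolding G_def using \<phi>m T\<psi>m by measurable
  have Gmu: "(\<lambda>x. ennreal (norm (G x))) \<in> borel_measurable (uniform_measure lebesgue Q)"
    using Gm by (simp add: measurable_cong_sets[OF sets_uniform_measure refl])
  have \<phi>mu: "(\<lambda>x. ennreal (norm (\<phi> x))) \<in> borel_measurable (uniform_measure lebesgue Q)"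
    using \<phi>m by (simp add: measurable_cong_sets[OF sets_uniform_measure refl])
  have kG: "ennreal (k x) = ennreal (norm (G x)) * ennreal (norm (\<phi> x))" for x
  proof (cases "\<phi> x = 0")
    case True then show ?thesis by (simp add: k_def \<psi>_def G_def)
  next
    case False
    then have "k x = norm (G x) * norm (\<phi> x)"
      by (simp add: k_def G_def matrix_vector_mult_scaleR)
    then show ?thesis by (simp add: ennreal_mult)
  qed
  have Gle: "ennreal (norm (G x)) \<le> ennreal (norm (T *v F x))" for x
  proof (cases "\<phi> x = 0 \<or> x \<notin> Q")
    case True then show ?thesis by (auto simp: G_def \<psi>_def)
  next
    case False then show ?thesis by (simp add: G_def \<psi>_def matrix_vector_mult_scaleR)
  qed
  have "(\<integral>\<^sup>+x. ennreal (k x) \<partial>uniform_measure lebesgue Q)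
      = (\<integral>\<^sup>+x. ennreal (norm (G x)) * ennreal (norm (\<phi> x)) \<partial>uniform_measure lebesgue Q)"
    by (simp add: kG)
  also have "\<dots> \<le> Lp_enn (ereal r) (uniform_measure lebesgue Q) (\<lambda>x. ennreal (norm (G x)))
        * Lp_enn (dual_exp r) (uniform_measure lebesgue Q) (\<lambda>x. ennreal (norm (\<phi> x)))"
    by (rule Hoelder_nn[OF Gmu \<phi>mu r])
  also have "\<dots> \<le> Lp_norm (ereal r) (uniform_measure lebesgue Q) (\<lambda>x. T *v F x) * 1"
  proof (rule mult_mono)
    show "Lp_enn (ereal r) (uniform_measure lebesgue Q) (\<lambda>x. ennreal (norm (G x)))
        \<le> Lp_norm (ereal r) (uniform_measure lebesgue Q) (\<lambda>x. T *v F x)"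
      unfolding Lp_norm_def by (rule Lp_enn_mono[OF Gmu Gle]) (use r in auto)
    show "Lp_enn (dual_exp r) (uniform_measure lebesgue Q) (\<lambda>x. ennreal (norm (\<phi> x))) \<le> 1"
      using \<phi>n by (simp add: Lp_norm_def)
  qed auto
  finally show ?thesis using step1 step2 by simp
qed

lemma body_bound:
  fixes Q :: "(real^'d) set" and F G :: "real^'d \<Rightarrow> real^'n" and U V :: "real^'n^'n"
  assumes Q: "Q \<in> cubes" and "spd U" "spd V" "1 \<le> r" "1 \<le> s"
  shows "body_prod (cbody r Q F) (cbody s Q G) \<le> ennreal (opnorm (V ** U))
     * Lp_norm (ereal r) (uniform_measure lebesgue Q) (\<lambda>x. matrix_inv V *v F x)
     * Lp_norm (ereal s) (uniform_measure lebesgue Q) (\<lambda>x. matrix_inv U *v G x)"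
  unfolding body_prod_def
proof (rule SUP_least)
  fix ab assume "ab \<in> cbody r Q F \<times> cbody s Q G"
  then obtain a b where ab: "ab = (a, b)" "a \<in> cbody r Q F" "b \<in> cbody s Q G" by auto
  have "ennreal (a \<bullet> b) \<le> ennreal (norm (matrix_inv V *v a) * opnorm (V ** U) * norm (matrix_inv U *v b))"
    by (rule ennreal_leI) (rule inner_bound[OF assms(3) assms(2)])
  also have "\<dots> = ennreal (opnorm (V ** U)) * ennreal (norm (matrix_inv V *v a)) * ennreal (norm (matrix_inv U *v b))"
    using opnorm_nonneg[of "V ** U"] by (simp add: ennreal_mult mult_ac)
  also have "\<dots> \<le> ennreal (opnorm (V ** U))
     * Lp_norm (ereal r) (uniform_measure lebesgue Q) (\<lambda>x. matrix_inv V *v F x)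
     * Lp_norm (ereal s) (uniform_measure lebesgue Q) (\<lambda>x. matrix_inv U *v G x)"
    by (intro mult_mono avg_bound[OF Q _ ab(2)] avg_bound[OF Q _ ab(3)] order_refl) (use assms in auto)
  finally show "ennreal (fst ab \<bullet> snd ab) \<le> ennreal (opnorm (V ** U))
     * Lp_norm (ereal r) (uniform_measure lebesgue Q) (\<lambda>x. matrix_inv V *v F x)
     * Lp_norm (ereal s) (uniform_measure lebesgue Q) (\<lambda>x. matrix_inv U *v G x)" using ab by simp
qed

lemma exp_ok: "1 \<le> p \<Longrightarrow> ereal p = \<infinity> \<or> (\<exists>q. ereal p = ereal q \<and> 0 < q)"
  by auto

lemma dual_exp_ok: "1 \<le> p \<Longrightarrow> dual_exp p = \<infinity> \<or> (\<exists>q. dual_exp p = ereal q \<and> 0 < q)"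
  by (auto simp: dual_exp_def)

lemma sum_single:
  fixes f :: "'a \<Rightarrow> ennreal"
  assumes "disjoint_family_on E S" "Fin \<subseteq> S" "finite Fin" "Q0 \<in> Fin" "x \<in> E Q0"
  shows "(\<Sum>Q\<in>Fin. f Q * indicator (E Q) x) = f Q0"
proof -
  have "(\<Sum>Q\<in>Fin. f Q * indicator (E Q) x) = (\<Sum>Q\<in>Fin. if Q = Q0 then f Q else 0)"
  proof (rule sum.cong[OF refl])
    fix Q assume Q: "Q \<in> Fin"
    show "f Q * indicator (E Q) x = (if Q = Q0 then f Q else 0)"
    proof (cases "Q = Q0")
      case True then show ?thesis using assms by simp
    next
      case False
      then have "E Q \<inter> E Q0 = {}" using assms Q by (intro disjoint_family_onD[OF assms(1)]) auto
      then have "x \<notin> E Q" using assms(5) by blast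
      then show ?thesis using False by simp
    qed
  qed
  also have "\<dots> = f Q0" using assms by simp
  finally show ?thesis .
qed

lemma ind_meas:
  assumes [measurable]: "A \<in> sets M"
  shows "(\<lambda>x. (c::ennreal) * indicator A x) \<in> borel_measurable M"
  by measurable

lemma sum_ind_meas:
  assumes "\<And>Q. Q \<in> Fin \<Longrightarrow> E Q \<in> sets M"
  shows "(\<lambda>x. \<Sum>Q\<in>Fin. (c Q::ennreal) * indicator (E Q) x) \<in> borel_measurable M"
  by (rule borel_measurable_sum) (rule ind_meas, rule assms)

lemma sum_none:
  fixes f :: "'a \<Rightarrow> ennreal"
  assumes "\<forall>Q\<in>Fin. x \<notin> E Q"
  shows "(\<Sum>Q\<in>Fin. f Q * indicator (E Q) x) = 0"
  using assms by (intro sum.neutral) auto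

lemma first_ineq:
  fixes A B :: "real^'d \<Rightarrow> real^'n^'n" and U V :: "(real^'d) set \<Rightarrow> real^'n^'n"
    and h g :: "real^'d \<Rightarrow> real^'n" and S :: "(real^'d) set set"
  assumes p: "1 \<le> p" and r: "1 \<le> r" and s: "1 \<le> s"
    and U: "\<forall>Q\<in>cubes. spd (U Q)" and V: "\<forall>Q\<in>cubes. spd (V Q)"
    and eta: "0 < \<eta>" and sp: "sparse \<eta> S"
  shows "(\<Sum>\<^sub>\<infinity>Q\<in>S. body_prod (cbody r Q (\<lambda>x. A x *v h x)) (cbody s Q (\<lambda>x. B x *v g x))
                     * ennreal (measure lebesgue Q))
         \<le> ennreal (1 / \<eta>) * (SUP Q\<in>cubes. ennreal (opnorm (V Q ** U Q)))
             * Lp_enn (ereal p) lebesgue (maxop V A r h)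
             * Lp_enn (dual_exp p) lebesgue (maxop U B s g)"
proof -
  obtain E where E: "\<And>Q. Q \<in> S \<Longrightarrow> E Q \<in> sets lebesgue \<and> E Q \<subseteq> Q \<and>
              \<eta> * measure lebesgue Q \<le> measure lebesgue (E Q)" and dis: "disjoint_family_on E S"
    and Sc: "S \<subseteq> cubes"
    using sp unfolding sparse_def by blast
  define \<alpha> where "\<alpha> Q = Lp_norm (ereal r) (uniform_measure lebesgue Q) (\<lambda>x. matrix_inv (V Q) *v (A x *v h x))" for Q
  define \<beta> where "\<beta> Q = Lp_norm (ereal s) (uniform_measure lebesgue Q) (\<lambda>x. matrix_inv (U Q) *v (B x *v g x))" for Q
  define \<sigma> where "\<sigma> = (SUP Q\<in>cubes. ennreal (opnorm (V Q ** U Q)))"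
  define bp where "bp Q = body_prod (cbody r Q (\<lambda>x. A x *v h x)) (cbody s Q (\<lambda>x. B x *v g x))" for Q
  define RHS where "RHS = ennreal (1 / \<eta>) * \<sigma> * Lp_enn (ereal p) lebesgue (maxop V A r h)
             * Lp_enn (dual_exp p) lebesgue (maxop U B s g)"
  have Em: "emeasure lebesgue (E Q) = ennreal (measure lebesgue (E Q))" if "Q \<in> S" for Q
  proof -
    have "emeasure lebesgue (E Q) \<le> emeasure lebesgue Q"
      using E[OF that] cube_facts(1)[of Q] that Sc by (intro emeasure_mono) auto
    also have "\<dots> < top" using cube_facts(2)[of Q] that Sc by auto
    finally show ?thesis by (intro emeasure_eq_ennreal_measure) auto
  qed
  have "(\<Sum>\<^sub>\<infinity>Q\<in>S. bp Q * ennreal (measure lebesgue Q)) \<le> RHS"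
  proof (rule infsum_le_finite_sums)
    show "(\<lambda>Q. bp Q * ennreal (measure lebesgue Q)) summable_on S"
      by (rule nonneg_summable_on_complete) auto
  next
    fix Fin assume Fin: "finite Fin" "Fin \<subseteq> S"
    have "(\<Sum>Q\<in>Fin. bp Q * ennreal (measure lebesgue Q))
        \<le> (\<Sum>Q\<in>Fin. \<sigma> * (\<alpha> Q * \<beta> Q) * (ennreal (1 / \<eta>) * emeasure lebesgue (E Q)))"
    proof (rule sum_mono)
      fix Q assume Q: "Q \<in> Fin"
      then have QS: "Q \<in> S" and Qc: "Q \<in> cubes" using Fin Sc by auto
      have "bp Q \<le> ennreal (opnorm (V Q ** U Q)) * \<alpha> Q * \<beta> Q"
        unfolding bp_def \<alpha>_def \<beta>_def by (rule body_bound[OF Qc]) (use U V Qc r s in auto)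
      also have "\<dots> \<le> \<sigma> * (\<alpha> Q * \<beta> Q)"
        unfolding mult.assoc \<sigma>_def by (intro mult_right_mono SUP_upper Qc) auto
      finally have 1: "bp Q \<le> \<sigma> * (\<alpha> Q * \<beta> Q)" .
      have "measure lebesgue Q \<le> (1 / \<eta>) * measure lebesgue (E Q)"
        using E[OF QS] eta by (simp add: field_simps)
      then have "ennreal (measure lebesgue Q) \<le> ennreal (1 / \<eta>) * ennreal (measure lebesgue (E Q))"
        using eta by (simp add: ennreal_mult[symmetric] ennreal_leI)
      then have 2: "ennreal (measure lebesgue Q) \<le> ennreal (1 / \<eta>) * emeasure lebesgue (E Q)"
        using Em[OF QS] by simp
      show "bp Q * ennreal (measure lebesgue Q) \<le> \<sigma> * (\<alpha> Q * \<beta> Q) * (ennreal (1 / \<eta>) * emeasure lebesgue (E Q))"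
        by (intro mult_mono 1 2) auto
    qed
    also have "\<dots> = ennreal (1 / \<eta>) * \<sigma> * (\<Sum>Q\<in>Fin. \<alpha> Q * \<beta> Q * emeasure lebesgue (E Q))"
      by (simp add: sum_distrib_left mult_ac)
    also have "(\<Sum>Q\<in>Fin. \<alpha> Q * \<beta> Q * emeasure lebesgue (E Q))
        = (\<integral>\<^sup>+x. (\<Sum>Q\<in>Fin. \<alpha> Q * \<beta> Q * indicator (E Q) x) \<partial>lebesgue)"
    proof -
      have "(\<integral>\<^sup>+x. (\<Sum>Q\<in>Fin. \<alpha> Q * \<beta> Q * indicator (E Q) x) \<partial>lebesgue)
          = (\<Sum>Q\<in>Fin. (\<integral>\<^sup>+x. \<alpha> Q * \<beta> Q * indicator (E Q) x \<partial>lebesgue))"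
        by (rule nn_integral_sum, rule ind_meas) (use E Fin in auto)
      also have "\<dots> = (\<Sum>Q\<in>Fin. \<alpha> Q * \<beta> Q * emeasure lebesgue (E Q))"
        by (rule sum.cong[OF refl], rule nn_integral_cmult_indicator) (use E Fin in auto)
      finally show ?thesis by simp
    qed
    also have "\<dots> = (\<integral>\<^sup>+x. (\<Sum>Q\<in>Fin. \<alpha> Q * indicator (E Q) x) * (\<Sum>Q\<in>Fin. \<beta> Q * indicator (E Q) x) \<partial>lebesgue)"
    proof (rule nn_integral_cong)
      fix x
      show "(\<Sum>Q\<in>Fin. \<alpha> Q * \<beta> Q * indicator (E Q) x) = (\<Sum>Q\<in>Fin. \<alpha> Q * indicator (E Q) x) * (\<Sum>Q\<in>Fin. \<beta> Q * indicator (E Q) x)"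
      proof (cases "\<exists>Q0\<in>Fin. x \<in> E Q0")
        case True
        then obtain Q0 where "Q0 \<in> Fin" "x \<in> E Q0" by blast
        then show ?thesis using sum_single[OF dis Fin(2) Fin(1)] by simp
      next
        case False
        then show ?thesis using sum_none[of Fin x E] by simp
      qed
    qed
    also have "\<dots> \<le> Lp_enn (ereal p) lebesgue (\<lambda>x. \<Sum>Q\<in>Fin. \<alpha> Q * indicator (E Q) x)
        * Lp_enn (dual_exp p) lebesgue (\<lambda>x. \<Sum>Q\<in>Fin. \<beta> Q * indicator (E Q) x)"
      by (rule Hoelder_nn[OF _ _ p]; rule sum_ind_meas) (use E Fin in auto)
    also have "\<dots> \<le> Lp_enn (ereal p) lebesgue (maxop V A r h) * Lp_enn (dual_exp p) lebesgue (maxop U B s g)"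
    proof (rule mult_mono)
      show "Lp_enn (ereal p) lebesgue (\<lambda>x. \<Sum>Q\<in>Fin. \<alpha> Q * indicator (E Q) x) \<le> Lp_enn (ereal p) lebesgue (maxop V A r h)"
      proof (rule Lp_enn_mono)
        show "(\<lambda>x. \<Sum>Q\<in>Fin. \<alpha> Q * indicator (E Q) x) \<in> borel_measurable lebesgue"
          by (rule sum_ind_meas) (use E Fin in auto)
        fix z show "(\<Sum>Q\<in>Fin. \<alpha> Q * indicator (E Q) z) \<le> maxop V A r h z"
        proof (cases "\<exists>Q0\<in>Fin. z \<in> E Q0")
          case True
          then obtain Q0 where Q0: "Q0 \<in> Fin" "z \<in> E Q0" by blast
          then have "Q0 \<in> {Q \<in> cubes. z \<in> Q}" using E Fin Sc by auto
          then have "\<alpha> Q0 \<le> maxop V A r h z" unfolding maxop_def \<alpha>_def by (rule SUP_upper)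
          then show ?thesis using sum_single[OF dis Fin(2) Fin(1) Q0] by simp
        next
          case False
          then show ?thesis using sum_none[of Fin z E] by simp
        qed
      qed (rule exp_ok[OF p])
      show "Lp_enn (dual_exp p) lebesgue (\<lambda>x. \<Sum>Q\<in>Fin. \<beta> Q * indicator (E Q) x) \<le> Lp_enn (dual_exp p) lebesgue (maxop U B s g)"
      proof (rule Lp_enn_mono)
        show "(\<lambda>x. \<Sum>Q\<in>Fin. \<beta> Q * indicator (E Q) x) \<in> borel_measurable lebesgue"
          by (rule sum_ind_meas) (use E Fin in auto)
        fix z show "(\<Sum>Q\<in>Fin. \<beta> Q * indicator (E Q) z) \<le> maxop U B s g z"
        proof (cases "\<exists>Q0\<in>Fin. z \<in> E Q0")
          case True
          then obtain Q0 where Q0: "Q0 \<in> Fin" "z \<in> E Q0" by blast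
          then have "Q0 \<in> {Q \<in> cubes. z \<in> Q}" using E Fin Sc by auto
          then have "\<beta> Q0 \<le> maxop U B s g z" unfolding maxop_def \<beta>_def by (rule SUP_upper)
          then show ?thesis using sum_single[OF dis Fin(2) Fin(1) Q0] by simp
        next
          case False
          then show ?thesis using sum_none[of Fin z E] by simp
        qed
      qed (rule dual_exp_ok[OF p])
    qed auto
    finally show "(\<Sum>Q\<in>Fin. bp Q * ennreal (measure lebesgue Q)) \<le> RHS"
      unfolding RHS_def by (simp add: mult.assoc mult_left_mono)
  qed
  then show ?thesis unfolding bp_def RHS_def \<sigma>_def .
qed


lemma nn_integral_cmult_ge:
  fixes c :: ennreal
  shows "c * integral\<^sup>N M f \<le> (\<integral>\<^sup>+x. c * f x \<partial>M)"
proof -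
  have "c * integral\<^sup>N M f = (SUP g\<in>{g. simple_function M g \<and> g \<le> f}. c * integral\<^sup>S M g)"
    unfolding nn_integral_def by (rule SUP_mult_left_ennreal)
  also have "\<dots> \<le> (\<integral>\<^sup>+x. c * f x \<partial>M)"
  proof (rule SUP_least)
    fix g assume g: "g \<in> {g. simple_function M g \<and> g \<le> f}"
    then have sg: "simple_function M (\<lambda>x. c * g x)" by auto
    have le: "(\<lambda>x. c * g x) \<le> (\<lambda>x. c * f x)"
      using g by (auto simp: le_fun_def intro: mult_left_mono)
    have "c * integral\<^sup>S M g = integral\<^sup>S M (\<lambda>x. c * g x)"
      using g by (simp add: simple_integral_mult)
    also have "\<dots> \<le> (\<integral>\<^sup>+x. c * f x \<partial>M)"
      unfolding nn_integral_def by (rule SUP_upper) (use sg le in auto)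
    finally show "c * integral\<^sup>S M g \<le> (\<integral>\<^sup>+x. c * f x \<partial>M)" .
  qed
  finally show ?thesis .
qed

lemma nn_integral_cmult_any:
  fixes k :: real
  assumes "0 < k"
  shows "(\<integral>\<^sup>+x. ennreal k * f x \<partial>M) = ennreal k * integral\<^sup>N M f"
proof (rule antisym)
  have "ennreal (1/k) * (\<integral>\<^sup>+x. ennreal k * f x \<partial>M) \<le> (\<integral>\<^sup>+x. ennreal (1/k) * (ennreal k * f x) \<partial>M)"
    by (rule nn_integral_cmult_ge)
  also have "\<dots> = integral\<^sup>N M f"
    using assms by (simp add: mult.assoc[symmetric] ennreal_mult[symmetric])
  finally have "ennreal k * (ennreal (1/k) * (\<integral>\<^sup>+x. ennreal k * f x \<partial>M)) \<le> ennreal k * integral\<^sup>N M f"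
    by (rule mult_left_mono) simp
  then show "(\<integral>\<^sup>+x. ennreal k * f x \<partial>M) \<le> ennreal k * integral\<^sup>N M f"
    using assms by (simp add: mult.assoc[symmetric] ennreal_mult[symmetric])
qed (rule nn_integral_cmult_ge)

lemma esssup_cmult_enn:
  fixes k :: real and F :: "'a \<Rightarrow> ennreal"
  assumes "0 < k"
  shows "esssup M (\<lambda>x. ennreal k * F x) = ennreal k * esssup M F"
proof (cases "F \<in> borel_measurable M")
  case True
  have m: "(\<lambda>x. ennreal k * F x) \<in> borel_measurable M" using True by measurable
  have 1: "esssup M (\<lambda>x. ennreal k * F x) \<le> ennreal k * esssup M F"
    by (rule esssup_I[OF m]) (use esssup_AE[of F M] in \<open>eventually_elim, auto intro: mult_left_mono\<close>)
  have "esssup M F \<le> ennreal (1/k) * esssup M (\<lambda>x. ennreal k * F x)"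
  proof (rule esssup_I[OF True])
    show "AE x in M. F x \<le> ennreal (1/k) * esssup M (\<lambda>x. ennreal k * F x)"
      using esssup_AE[of "\<lambda>x. ennreal k * F x" M]
    proof eventually_elim
      case (elim x)
      then have "ennreal (1/k) * (ennreal k * F x) \<le> ennreal (1/k) * esssup M (\<lambda>x. ennreal k * F x)"
        by (rule mult_left_mono) simp
      then show ?case using assms by (simp add: mult.assoc[symmetric] ennreal_mult[symmetric])
    qed
  qed
  then have "ennreal k * esssup M F \<le> ennreal k * (ennreal (1/k) * esssup M (\<lambda>x. ennreal k * F x))"
    by (rule mult_left_mono) simp
  then have 2: "ennreal k * esssup M F \<le> esssup M (\<lambda>x. ennreal k * F x)"
    using assms by (simp add: mult.assoc[symmetric] ennreal_mult[symmetric])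
  show ?thesis using 1 2 by (rule antisym)
next
  case False
  have "(\<lambda>x. ennreal k * F x) \<notin> borel_measurable M"
  proof
    assume "(\<lambda>x. ennreal k * F x) \<in> borel_measurable M"
    then have "(\<lambda>x. ennreal (1/k) * (ennreal k * F x)) \<in> borel_measurable M" by measurable
    moreover have "(\<lambda>x. ennreal (1/k) * (ennreal k * F x)) = F"
      using assms by (simp add: mult.assoc[symmetric] ennreal_mult[symmetric])
    ultimately show False using False by simp
  qed
  then show ?thesis using False assms
    by (simp add: esssup_non_measurable ennreal_top_mult_left)
qed

lemma Lp_enn_cmult:
  fixes k :: real
  assumes "0 < k" "P = \<infinity> \<or> (\<exists>q. P = ereal q \<and> 0 < q)"
  shows "Lp_enn P M (\<lambda>x. ennreal k * F x) = ennreal k * Lp_enn P M F"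
  using assms(2)
proof
  assume "P = \<infinity>"
  then show ?thesis by (simp add: Lp_enn_infty esssup_cmult_enn[OF assms(1)])
next
  assume "\<exists>q. P = ereal q \<and> 0 < q"
  then obtain q where q: "P = ereal q" "0 < q" by auto
  have kq: "0 < k powr q" using assms by simp
  have "(\<integral>\<^sup>+x. enn_powr (ennreal k * F x) q \<partial>M) = (\<integral>\<^sup>+x. ennreal (k powr q) * enn_powr (F x) q \<partial>M)"
    using assms by (simp add: enn_powr_mult enn_powr_ennreal)
  also have "\<dots> = ennreal (k powr q) * (\<integral>\<^sup>+x. enn_powr (F x) q \<partial>M)"
    by (rule nn_integral_cmult_any[OF kq])
  finally have "enn_powr (\<integral>\<^sup>+x. enn_powr (ennreal k * F x) q \<partial>M) (1/q)
      = enn_powr (ennreal (k powr q)) (1/q) * enn_powr (\<integral>\<^sup>+x. enn_powr (F x) q \<partial>M) (1/q)"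
    by (simp add: enn_powr_mult)
  also have "enn_powr (ennreal (k powr q)) (1/q) = ennreal k"
    using assms q by (simp add: enn_powr_ennreal powr_powr)
  finally show ?thesis unfolding q Lp_enn_ereal .
qed

lemma Lp_norm_scale:
  fixes k :: real
  assumes "0 < k" "P = \<infinity> \<or> (\<exists>q. P = ereal q \<and> 0 < q)"
  shows "Lp_norm P M (\<lambda>x. k *\<^sub>R f x) = ennreal k * Lp_norm P M f"
proof -
  have "(\<lambda>x. ennreal (norm (k *\<^sub>R f x))) = (\<lambda>x. ennreal k * ennreal (norm (f x)))"
    using assms by (simp add: ennreal_mult)
  then show ?thesis unfolding Lp_norm_def using Lp_enn_cmult[OF assms] by simp
qed

lemma maxop_scale:
  fixes k :: real
  assumes "0 < k" "1 \<le> r"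
  shows "maxop V A r (\<lambda>x. k *\<^sub>R f x) z = ennreal k * maxop V A r f z"
proof -
  have "Lp_norm (ereal r) (uniform_measure lebesgue Q) (\<lambda>x. matrix_inv (V Q) *v (A x *v (k *\<^sub>R f x)))
     = ennreal k * Lp_norm (ereal r) (uniform_measure lebesgue Q) (\<lambda>x. matrix_inv (V Q) *v (A x *v f x))" for Q
  proof -
    have "(\<lambda>x. matrix_inv (V Q) *v (A x *v (k *\<^sub>R f x))) = (\<lambda>x. k *\<^sub>R (matrix_inv (V Q) *v (A x *v f x)))"
      by (simp add: matrix_vector_mult_scaleR)
    then show ?thesis using Lp_norm_scale[OF assms(1), of "ereal r"] assms(2) by simp
  qed
  then show ?thesis unfolding maxop_def by (simp add: SUP_mult_left_ennreal)
qed

lemma Lp_maxop_scale: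
  fixes k :: real
  assumes "0 < k" "1 \<le> r" "P = \<infinity> \<or> (\<exists>q. P = ereal q \<and> 0 < q)"
  shows "Lp_enn P M (maxop V A r (\<lambda>x. k *\<^sub>R f x)) = ennreal k * Lp_enn P M (maxop V A r f)"
proof -
  have "maxop V A r (\<lambda>x. k *\<^sub>R f x) = (\<lambda>z. ennreal k * maxop V A r f z)"
    using maxop_scale[OF assms(1,2)] by blast
  then show ?thesis using Lp_enn_cmult[OF assms(1) assms(3)] by simp
qed


lemma Lp_enn_zero:
  assumes "P = \<infinity> \<or> (\<exists>q. P = ereal q \<and> 0 < q)"
  shows "Lp_enn P M (\<lambda>x. 0) = 0"
  using assms
proof
  assume "P = \<infinity>"
  have "esssup M (\<lambda>x. 0::ennreal) \<le> 0" by (rule esssup_I) auto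
  then show ?thesis using `P = \<infinity>` by (simp add: Lp_enn_infty)
next
  assume "\<exists>q. P = ereal q \<and> 0 < q"
  then obtain q where "P = ereal q" by auto
  then show ?thesis by (simp add: Lp_enn_ereal)
qed

lemma maxop_zero:
  assumes "AE x in lebesgue. h x = 0"
  shows "maxop V A r h z = 0"
  unfolding maxop_def
proof (rule antisym[OF SUP_least zero_le])
  fix Q assume Q: "Q \<in> {Q \<in> cubes. z \<in> Q}"
  have "AE x in uniform_measure lebesgue Q. h x = 0"
    by (rule AE_uniform_measureI) (use Q cube_facts(1)[of Q] assms in auto)
  then have "(\<integral>\<^sup>+x. enn_powr (ennreal (norm (matrix_inv (V Q) *v (A x *v h x)))) r \<partial>uniform_measure lebesgue Q)
      \<le> (\<integral>\<^sup>+x. 0 \<partial>uniform_measure lebesgue Q)"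
    by (intro nn_integral_mono_AE) (auto elim!: eventually_mono)
  then show "Lp_norm (ereal r) (uniform_measure lebesgue Q) (\<lambda>x. matrix_inv (V Q) *v (A x *v h x)) \<le> 0"
    by (simp add: Lp_norm_def Lp_enn_ereal)
qed

lemma Lp_zero_AE:
  fixes h :: "'a \<Rightarrow> 'b::real_normed_vector"
  assumes hm: "h \<in> borel_measurable M" and z: "Lp_norm P M h = 0"
    and P: "P = \<infinity> \<or> (\<exists>q. P = ereal q \<and> 0 < q)"
  shows "AE x in M. h x = 0"
  using P
proof
  assume "P = \<infinity>"
  then have "esssup M (\<lambda>x. ennreal (norm (h x))) = 0" using z by (simp add: Lp_norm_def Lp_enn_infty)
  then show ?thesis using esssup_AE[of "\<lambda>x. ennreal (norm (h x))" M]
    by (auto elim!: eventually_mono)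
next
  assume "\<exists>q. P = ereal q \<and> 0 < q"
  then obtain q where q: "P = ereal q" by auto
  have m: "(\<lambda>x. enn_powr (ennreal (norm (h x))) q) \<in> borel_measurable M" using hm by measurable
  have "(\<integral>\<^sup>+x. enn_powr (ennreal (norm (h x))) q \<partial>M) = 0"
    using z q by (simp add: Lp_norm_def Lp_enn_ereal enn_powr_eq_0_iff)
  then have "AE x in M. enn_powr (ennreal (norm (h x))) q = 0"
    using nn_integral_0_iff_AE[OF m] by simp
  then show ?thesis by (auto elim!: eventually_mono simp: enn_powr_eq_0_iff)
qed

lemma bound_pos:
  fixes h :: "real^'d \<Rightarrow> real^'n"
  assumes hm: "h \<in> borel_measurable lebesgue" and t: "Lp_norm P lebesgue h = ennreal \<tau>" "0 < \<tau>"
    and r: "1 \<le> r" and P: "P = \<infinity> \<or> (\<exists>q. P = ereal q \<and> 0 < q)"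
  shows "Lp_enn P lebesgue (maxop V A r h) \<le> op_Lp_norm P (maxop V A r) * ennreal \<tau>"
proof -
  define f where "f x = (1/\<tau>) *\<^sub>R h x" for x
  have fm: "f \<in> borel_measurable lebesgue" unfolding f_def using hm by measurable
  have "Lp_norm P lebesgue f = ennreal (1/\<tau>) * ennreal \<tau>"
    unfolding f_def using Lp_norm_scale[of "1/\<tau>" P lebesgue h] t P by simp
  also have "\<dots> = 1" using t by (simp flip: ennreal_mult)
  finally have fn: "Lp_norm P lebesgue f \<le> 1" by simp
  have "Lp_enn P lebesgue (maxop V A r f) \<le> op_Lp_norm P (maxop V A r)"
    unfolding op_Lp_norm_def by (rule SUP_upper) (use fm fn in auto)
  moreover have "h = (\<lambda>x. \<tau> *\<^sub>R f x)" using t by (auto simp: f_def)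
  ultimately have "Lp_enn P lebesgue (maxop V A r h) \<le> ennreal \<tau> * op_Lp_norm P (maxop V A r)"
    using Lp_maxop_scale[OF t(2) r P, of lebesgue V A f] by (simp add: mult_left_mono)
  then show ?thesis by (simp add: mult.commute)
qed

lemma nn_integral_pos_simple:
  assumes "integral\<^sup>N M F \<noteq> 0"
  shows "\<exists>g. simple_function M g \<and> g \<le> F \<and> integral\<^sup>S M g \<noteq> 0"
proof (rule ccontr)
  assume "\<not> ?thesis"
  then have "integral\<^sup>N M F \<le> 0" unfolding nn_integral_def
    by (intro SUP_least) auto
  then show False using assms by simp
qed

lemma truncation:
  fixes h :: "real^'d \<Rightarrow> real^'n" and T :: "real^'n^'n"
  assumes hm: "h \<in> borel_measurable lebesgue" and Q: "Q \<in> cubes"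
    and nz: "Lp_norm (ereal r) (uniform_measure lebesgue Q) (\<lambda>x. T *v (A x *v h x)) \<noteq> 0"
  shows "\<exists>k::nat. Lp_norm (ereal r) (uniform_measure lebesgue Q)
      (\<lambda>x. T *v (A x *v (indicator {x\<in>Q. norm (h x) \<le> real k} x *\<^sub>R h x))) \<noteq> 0"
proof -
  define M where "M = uniform_measure lebesgue Q"
  define \<Phi> where "\<Phi> = (\<lambda>x. enn_powr (ennreal (norm (T *v (A x *v h x)))) r)"
  define B where "B k = {x\<in>Q. norm (h x) \<le> real k}" for k :: nat
  have Ql: "Q \<in> sets lebesgue" using cube_facts(1)[OF Q] .
  have Bm: "B k \<in> sets M" for k
  proof -
    have "B k = Q \<inter> {x \<in> space lebesgue. norm (h x) \<le> real k}" by (auto simp: B_def)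
    also have "\<dots> \<in> sets lebesgue" using Ql hm by measurable
    finally show ?thesis by (simp add: M_def)
  qed
  have "integral\<^sup>N M \<Phi> \<noteq> 0" using nz
    by (simp add: Lp_norm_def Lp_enn_ereal enn_powr_eq_0_iff M_def \<Phi>_def)
  then obtain g where g: "simple_function M g" "g \<le> \<Phi>" "integral\<^sup>S M g \<noteq> 0"
    using nn_integral_pos_simple by blast
  have gm: "g \<in> borel_measurable M" using g(1) by (rule borel_measurable_simple_function)
  have "integral\<^sup>N M g \<noteq> 0" using g(3) unfolding nn_integral_eq_simple_integral[OF g(1)] .
  moreover have "integral\<^sup>N M g = (\<integral>\<^sup>+x. g x * indicator Q x \<partial>M)"
  proof (rule nn_integral_cong_AE)
    have "AE x in M. x \<in> Q" unfolding M_def by (rule AE_uniform_measureI[OF Ql]) auto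
    then show "AE x in M. g x = g x * indicator Q x" by (auto elim!: eventually_mono)
  qed
  moreover have "(\<lambda>x. g x * indicator Q x) = (\<lambda>x. SUP k. g x * indicator (B k) x)"
  proof
    fix x show "g x * indicator Q x = (SUP k. g x * indicator (B k) x)"
    proof (cases "x \<in> Q")
      case False then show ?thesis by (simp add: B_def)
    next
      case True
      obtain k0 :: nat where "norm (h x) \<le> real k0" using real_arch_simple by blast
      then have xb: "x \<in> B k0" using True by (simp add: B_def)
      show ?thesis
      proof (rule antisym)
        show "g x * indicator Q x \<le> (SUP k. g x * indicator (B k) x)"
          by (rule SUP_upper2[of k0]) (use True xb in auto)
        show "(SUP k. g x * indicator (B k) x) \<le> g x * indicator Q x"
          by (rule SUP_least) (use True in \<open>auto simp: indicator_def\<close>)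
      qed
    qed
  qed
  moreover have "(\<integral>\<^sup>+x. (SUP k. g x * indicator (B k) x) \<partial>M) = (SUP k. \<integral>\<^sup>+x. g x * indicator (B k) x \<partial>M)"
  proof (rule nn_integral_monotone_convergence_SUP)
    show "incseq (\<lambda>k x. g x * indicator (B k) x)"
      by (rule incseq_SucI) (auto simp: le_fun_def B_def indicator_def)
    show "\<And>k. (\<lambda>x. g x * indicator (B k) x) \<in> borel_measurable M"
      using gm Bm by measurable
  qed
  ultimately have "(SUP k. \<integral>\<^sup>+x. g x * indicator (B k) x \<partial>M) \<noteq> 0" by simp
  then obtain k where k: "(\<integral>\<^sup>+x. g x * indicator (B k) x \<partial>M) \<noteq> 0"
    by (metis (no_types, lifting) SUP_least le_zero_eq)
  have "(\<integral>\<^sup>+x. g x * indicator (B k) x \<partial>M)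
     \<le> (\<integral>\<^sup>+x. enn_powr (ennreal (norm (T *v (A x *v (indicator (B k) x *\<^sub>R h x))))) r \<partial>M)"
  proof (rule nn_integral_mono)
    fix x show "g x * indicator (B k) x \<le> enn_powr (ennreal (norm (T *v (A x *v (indicator (B k) x *\<^sub>R h x))))) r"
    proof (cases "x \<in> B k")
      case True
      then show ?thesis using g(2) by (auto simp: le_fun_def \<Phi>_def)
    qed simp
  qed
  then have "(\<integral>\<^sup>+x. enn_powr (ennreal (norm (T *v (A x *v (indicator (B k) x *\<^sub>R h x))))) r \<partial>M) \<noteq> 0"
    using k by (auto simp: le_zero_eq)
  then show ?thesis
    by (intro exI[of _ k]) (simp add: Lp_norm_def Lp_enn_ereal enn_powr_eq_0_iff M_def B_def)
qed

lemma trunc_finite: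
  fixes h :: "real^'d \<Rightarrow> real^'n"
  assumes hm: "h \<in> borel_measurable lebesgue" and Q: "Q \<in> cubes"
    and P: "P = \<infinity> \<or> (\<exists>q. P = ereal q \<and> 0 < q)"
  shows "Lp_norm P lebesgue (\<lambda>x. indicator {x\<in>Q. norm (h x) \<le> real k} x *\<^sub>R h x) \<noteq> top"
proof -
  have Ql[measurable]: "Q \<in> sets lebesgue" using cube_facts(1)[OF Q] .
  define f where "f = (\<lambda>x. indicator {x\<in>Q. norm (h x) \<le> real k} x *\<^sub>R h x)"
  have fm: "(\<lambda>x. ennreal (norm (f x))) \<in> borel_measurable lebesgue" unfolding f_def using hm by measurable
  have le: "ennreal (norm (f x)) \<le> ennreal (real k) * indicator Q x" for x
    by (auto simp: f_def indicator_def)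
  have "Lp_norm P lebesgue f \<le> Lp_enn P lebesgue (\<lambda>x. ennreal (real k) * indicator Q x)"
    unfolding Lp_norm_def by (rule Lp_enn_mono[OF fm le P])
  also have "\<dots> < top"
    using P
  proof
    assume "P = \<infinity>"
    have "esssup lebesgue (\<lambda>x. ennreal (real k) * indicator Q x) \<le> ennreal (real k)"
      by (rule esssup_I) (auto simp: indicator_def)
    then show ?thesis using `P = \<infinity>` by (simp add: Lp_enn_infty le_less_trans)
  next
    assume "\<exists>q. P = ereal q \<and> 0 < q"
    then obtain q where q: "P = ereal q" "0 < q" by auto
    have "(\<integral>\<^sup>+x. enn_powr (ennreal (real k) * indicator Q x) q \<partial>lebesgue)
        = (\<integral>\<^sup>+x. enn_powr (ennreal (real k)) q * indicator Q x \<partial>lebesgue)"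
      by (rule nn_integral_cong) (auto simp: indicator_def)
    also have "\<dots> = enn_powr (ennreal (real k)) q * emeasure lebesgue Q"
      by (rule nn_integral_cmult_indicator[OF Ql])
    also have "\<dots> \<noteq> top" using cube_facts(2)[OF Q] by (simp add: enn_powr_ennreal ennreal_mult_eq_top_iff)
    finally show ?thesis using q by (simp add: Lp_enn_ereal enn_powr_def less_top)
  qed
  finally show ?thesis by (simp add: f_def less_top)
qed

lemma maxop_pos:
  fixes f :: "real^'d \<Rightarrow> real^'n"
  assumes Q: "Q \<in> cubes"
    and nz: "Lp_norm (ereal r) (uniform_measure lebesgue Q) (\<lambda>x. matrix_inv (V Q) *v (A x *v f x)) \<noteq> 0"
    and P: "P = \<infinity> \<or> (\<exists>q. P = ereal q \<and> 0 < q)"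
  shows "Lp_enn P lebesgue (maxop V A r f) \<noteq> 0"
proof -
  have Ql[measurable]: "Q \<in> sets lebesgue" using cube_facts(1)[OF Q] .
  define c where "c = Lp_norm (ereal r) (uniform_measure lebesgue Q) (\<lambda>x. matrix_inv (V Q) *v (A x *v f x))"
  have c0: "c \<noteq> 0" using nz by (simp add: c_def)
  have cm: "(\<lambda>x. c * indicator Q x) \<in> borel_measurable lebesgue" by measurable
  have le: "c * indicator Q z \<le> maxop V A r f z" for z
  proof (cases "z \<in> Q")
    case True
    then have "c \<le> maxop V A r f z" unfolding maxop_def c_def by (intro SUP_upper) (use Q in auto)
    then show ?thesis using True by simp
  qed simp
  have mono: "Lp_enn P lebesgue (\<lambda>x. c * indicator Q x) \<le> Lp_enn P lebesgue (maxop V A r f)"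
    by (rule Lp_enn_mono[OF cm le P])
  have "Lp_enn P lebesgue (\<lambda>x. c * indicator Q x) \<noteq> 0"
    using P
  proof
    assume "P = \<infinity>"
    show ?thesis
    proof
      assume "Lp_enn P lebesgue (\<lambda>x. c * indicator Q x) = 0"
      then have "esssup lebesgue (\<lambda>x. c * indicator Q x) = 0" using `P = \<infinity>` by (simp add: Lp_enn_infty)
      then have "AE x in lebesgue. c * indicator Q x \<le> 0"
        using esssup_AE[of "\<lambda>x. c * indicator Q x" lebesgue] by simp
      then have "AE x in lebesgue. x \<notin> Q" using c0 by (auto elim!: eventually_mono simp: indicator_def)
      then have "emeasure lebesgue Q = 0" by (subst (asm) AE_iff_measurable[OF Ql]) auto
      then show False using cube_facts(2,3)[OF Q] by simp
    qed
  next
    assume "\<exists>q. P = ereal q \<and> 0 < q"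
    then obtain q where q: "P = ereal q" "0 < q" by auto
    have "(\<integral>\<^sup>+x. enn_powr (c * indicator Q x) q \<partial>lebesgue)
        = (\<integral>\<^sup>+x. enn_powr c q * indicator Q x \<partial>lebesgue)"
      by (rule nn_integral_cong) (auto simp: indicator_def)
    also have "\<dots> = enn_powr c q * emeasure lebesgue Q"
      by (rule nn_integral_cmult_indicator[OF Ql])
    also have "\<dots> \<noteq> 0" using cube_facts(2,3)[OF Q] c0 by (simp add: enn_powr_eq_0_iff)
    finally show ?thesis using q by (simp add: Lp_enn_ereal enn_powr_eq_0_iff)
  qed
  then show ?thesis using mono by (auto simp: le_zero_eq)
qed

lemma op_bound:
  fixes h :: "real^'d \<Rightarrow> real^'n" and V :: "(real^'d) set \<Rightarrow> real^'n^'n"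
  assumes hm: "h \<in> borel_measurable lebesgue" and r: "1 \<le> r"
    and P: "P = \<infinity> \<or> (\<exists>q. P = ereal q \<and> 0 < q)"
  shows "Lp_enn P lebesgue (maxop V A r h) \<le> op_Lp_norm P (maxop V A r) * Lp_norm P lebesgue h"
proof -
  have zero: "Lp_enn P lebesgue (maxop V A r f) = 0" if "f \<in> borel_measurable lebesgue" "Lp_norm P lebesgue f = 0" for f
  proof -
    have "AE x in lebesgue. f x = 0" by (rule Lp_zero_AE[OF that P])
    then have "maxop V A r f = (\<lambda>z. 0)" using maxop_zero by blast
    then show ?thesis using Lp_enn_zero[OF P] by simp
  qed
  consider "Lp_norm P lebesgue h = 0" | "Lp_norm P lebesgue h = top" | \<tau> where "Lp_norm P lebesgue h = ennreal \<tau>" "0 < \<tau>"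
    by (cases "Lp_norm P lebesgue h") (auto simp: less_le)
  then show ?thesis
  proof cases
    case 1 then show ?thesis using zero[OF hm] by simp
  next
    case 3 then show ?thesis using bound_pos[OF hm 3(1) 3(2) r P] by simp
  next
    case 2
    show ?thesis
    proof (cases "Lp_enn P lebesgue (maxop V A r h) = 0")
      case True then show ?thesis by simp
    next
      case False
      have "\<exists>z. maxop V A r h z \<noteq> 0"
      proof (rule ccontr)
        assume "\<not> ?thesis"
        then have "maxop V A r h = (\<lambda>z. 0)" by auto
        then have "Lp_enn P lebesgue (maxop V A r h) = Lp_enn P lebesgue (\<lambda>z::real^'d. 0::ennreal)" by simp
        also have "\<dots> = 0" by (rule Lp_enn_zero[OF P])
        finally show False using False by simp
      qed
      then obtain z where "maxop V A r h z \<noteq> 0" by blast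
      then obtain Q where Q: "Q \<in> cubes" "z \<in> Q"
        and nz: "Lp_norm (ereal r) (uniform_measure lebesgue Q) (\<lambda>x. matrix_inv (V Q) *v (A x *v h x)) \<noteq> 0"
        unfolding maxop_def by (metis (no_types, lifting) SUP_least le_zero_eq mem_Collect_eq)
      obtain k :: nat where k: "Lp_norm (ereal r) (uniform_measure lebesgue Q)
         (\<lambda>x. matrix_inv (V Q) *v (A x *v (indicator {x\<in>Q. norm (h x) \<le> real k} x *\<^sub>R h x))) \<noteq> 0"
        using truncation[OF hm Q(1) nz] by blast
      define f where "f x = indicator {x\<in>Q. norm (h x) \<le> real k} x *\<^sub>R h x" for x
      have Ql[measurable]: "Q \<in> sets lebesgue" using cube_facts(1)[OF Q(1)] .
      have fm: "f \<in> borel_measurable lebesgue" unfolding f_def using hm by measurable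
      have mpos: "Lp_enn P lebesgue (maxop V A r f) \<noteq> 0"
        by (rule maxop_pos[OF Q(1) _ P]) (use k in \<open>simp add: f_def\<close>)
      have fin: "Lp_norm P lebesgue f \<noteq> top" unfolding f_def by (rule trunc_finite[OF hm Q(1) P])
      have "Lp_norm P lebesgue f \<noteq> 0" using zero[OF fm] mpos by auto
      then obtain \<tau> where \<tau>: "Lp_norm P lebesgue f = ennreal \<tau>" "0 < \<tau>"
        using fin by (cases "Lp_norm P lebesgue f") (auto simp: less_le)
      have "Lp_enn P lebesgue (maxop V A r f) \<le> op_Lp_norm P (maxop V A r) * ennreal \<tau>"
        by (rule bound_pos[OF fm \<tau> r P])
      then have "op_Lp_norm P (maxop V A r) \<noteq> 0" using mpos by auto
      then have "op_Lp_norm P (maxop V A r) * Lp_norm P lebesgue h = top"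
        using 2 by (simp add: ennreal_top_mult_left)
      then show ?thesis by simp
    qed
  qed
qed


theorem mainTheorem11:
  fixes p r s \<eta> :: real
    and W :: "real^'d \<Rightarrow> real^'n^'n"
    and U V :: "(real^'d) set \<Rightarrow> real^'n^'n"
    and S :: "(real^'d) set set"
    and h g :: "real^'d \<Rightarrow> real^'n"
  assumes "1 \<le> p" "1 \<le> r" "1 \<le> s"
    and "W \<in> borel_measurable lebesgue" "AE x in lebesgue. spd (W x)"
    and "\<forall>Q\<in>cubes. spd (U Q)" "\<forall>Q\<in>cubes. spd (V Q)"
    and "0 < \<eta>" "\<eta> < 1" "sparse \<eta> S"
    and "h \<in> borel_measurable lebesgue" "g \<in> borel_measurable lebesgue"
  shows "(\<Sum>\<^sub>\<infinity>Q\<in>S. body_prod (cbody r Q (\<lambda>x. matpow (W x) (- 1 / p) *v h x))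
                                 (cbody s Q (\<lambda>x. matpow (W x) (1 / p) *v g x))
                     * ennreal (measure lebesgue Q))
         \<le> ennreal (1 / \<eta>) * (SUP Q\<in>cubes. ennreal (opnorm (V Q ** U Q)))
             * Lp_enn (ereal p) lebesgue (maxop V (\<lambda>x. matpow (W x) (- 1 / p)) r h)
             * Lp_enn (dual_exp p) lebesgue (maxop U (\<lambda>x. matpow (W x) (1 / p)) s g)
       \<and> ennreal (1 / \<eta>) * (SUP Q\<in>cubes. ennreal (opnorm (V Q ** U Q)))
             * Lp_enn (ereal p) lebesgue (maxop V (\<lambda>x. matpow (W x) (- 1 / p)) r h)
             * Lp_enn (dual_exp p) lebesgue (maxop U (\<lambda>x. matpow (W x) (1 / p)) s g)
         \<le> ennreal (1 / \<eta>) * (SUP Q\<in>cubes. ennreal (opnorm (V Q ** U Q)))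
             * op_Lp_norm (ereal p) (maxop V (\<lambda>x. matpow (W x) (- 1 / p)) r)
             * op_Lp_norm (dual_exp p) (maxop U (\<lambda>x. matpow (W x) (1 / p)) s)
             * Lp_norm (ereal p) lebesgue h * Lp_norm (dual_exp p) lebesgue g"
proof (rule conjI)
  show "(\<Sum>\<^sub>\<infinity>Q\<in>S. body_prod (cbody r Q (\<lambda>x. matpow (W x) (- 1 / p) *v h x))
                                 (cbody s Q (\<lambda>x. matpow (W x) (1 / p) *v g x))
                     * ennreal (measure lebesgue Q))
         \<le> ennreal (1 / \<eta>) * (SUP Q\<in>cubes. ennreal (opnorm (V Q ** U Q)))
             * Lp_enn (ereal p) lebesgue (maxop V (\<lambda>x. matpow (W x) (- 1 / p)) r h)
             * Lp_enn (dual_exp p) lebesgue (maxop U (\<lambda>x. matpow (W x) (1 / p)) s g)"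
    using first_ineq[OF assms(1,2,3,6,7,8,10), of "\<lambda>x. matpow (W x) (- 1 / p)" h "\<lambda>x. matpow (W x) (1 / p)" g]
    by simp
next
  let ?c = "ennreal (1 / \<eta>) * (SUP Q\<in>cubes. ennreal (opnorm (V Q ** U Q)))"
  let ?X = "Lp_enn (ereal p) lebesgue (maxop V (\<lambda>x. matpow (W x) (- 1 / p)) r h)"
  let ?Y = "Lp_enn (dual_exp p) lebesgue (maxop U (\<lambda>x. matpow (W x) (1 / p)) s g)"
  let ?N1 = "op_Lp_norm (ereal p) (maxop V (\<lambda>x. matpow (W x) (- 1 / p)) r)"
  let ?N2 = "op_Lp_norm (dual_exp p) (maxop U (\<lambda>x. matpow (W x) (1 / p)) s)"
  let ?H = "Lp_norm (ereal p) lebesgue h"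
  let ?G = "Lp_norm (dual_exp p) lebesgue g"
  have X: "?X \<le> ?N1 * ?H" by (rule op_bound[OF assms(11) assms(2) exp_ok[OF assms(1)]])
  have Y: "?Y \<le> ?N2 * ?G" by (rule op_bound[OF assms(12) assms(3) dual_exp_ok[OF assms(1)]])
  have "?c * ?X * ?Y \<le> ?c * (?N1 * ?H) * (?N2 * ?G)"
    by (intro mult_mono X Y order_refl) auto
  also have "\<dots> = ?c * ?N1 * ?N2 * ?H * ?G" by (simp add: mult_ac)
  finally show "?c * ?X * ?Y \<le> ?c * ?N1 * ?N2 * ?H * ?G" .
qed

end
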